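(* Let $G$ be a 2-connected simple graph with maximum degree $\Delta(G)$. Then $\phi(G)\ge \lfloor \Delta(G)/2\rfloor$.
   Context: For a graph $G$, $\phi(G)$ is the maximum number of pairwise edge-disjoint cycles in $G$. *)

theory Defs
  imports Main
begin

definition simple_graph :: "'a set \<Rightarrow> 'a set set \<Rightarrow> bool" where
  "simple_graph V E \<longleftrightarrow> finite V \<and>
     (\<forall>e\<in>E. \<exists>u v. u \<noteq> v \<and> u \<in> V \<and> v \<in> V \<and> e = {u, v})"

definition degree :: "'a set set \<Rightarrow> 'a \<Rightarrow> nat" where
  "degree E v = card {e \<in> E. v \<in> e}"

definition max_degree :: "'a set \<Rightarrow> 'a set set \<Rightarrow> nat" where
  "max_degree V E = Max (degree E ` V)"

definition adj :: "'a set set \<Rightarrow> 'a \<Rightarrow> 'a \<Rightarrow> bool" where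
  "adj E u v \<longleftrightarrow> {u, v} \<in> E"

definition connected_graph :: "'a set \<Rightarrow> 'a set set \<Rightarrow> bool" where
  "connected_graph V E \<longleftrightarrow> V \<noteq> {} \<and> (\<forall>u\<in>V. \<forall>v\<in>V. (adj E)\<^sup>*\<^sup>* u v)"

definition del_vertex_edges :: "'a set set \<Rightarrow> 'a \<Rightarrow> 'a set set" where
  "del_vertex_edges E x = {e \<in> E. x \<notin> e}"

definition two_connected :: "'a set \<Rightarrow> 'a set set \<Rightarrow> bool" where
  "two_connected V E \<longleftrightarrow> card V \<ge> 3 \<and> connected_graph V E \<and>
     (\<forall>x\<in>V. connected_graph (V - {x}) (del_vertex_edges E x))"

definition cycle_edges :: "'a list \<Rightarrow> 'a set set" where
  "cycle_edges vs = {{vs ! i, vs ! ((i + 1) mod length vs)} | i. i < length vs}"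

definition is_cycle :: "'a set set \<Rightarrow> 'a set set \<Rightarrow> bool" where
  "is_cycle E C \<longleftrightarrow> (\<exists>vs. length vs \<ge> 3 \<and> distinct vs \<and> C = cycle_edges vs \<and> C \<subseteq> E)"

definition phi :: "'a set set \<Rightarrow> nat" where
  "phi E = Max {card \<C> | \<C>. \<C> \<subseteq> {C. is_cycle E C} \<and> pairwise disjnt \<C>}"

end

theory Submission
  imports Defs
begin


lemma adj_sym: "adj E u v \<Longrightarrow> adj E v u" by (simp add: adj_def insert_commute)

lemma rt_sym: "(adj E)\<^sup>*\<^sup>* u v \<Longrightarrow> (adj E)\<^sup>*\<^sup>* v u"
  by (induction rule: rtranclp_induct) (auto intro: converse_rtranclp_into_rtranclp adj_sym)

lemma rt_mono: "F \<subseteq> G \<Longrightarrow> (adj F)\<^sup>*\<^sup>* u v \<Longrightarrow> (adj G)\<^sup>*\<^sup>* u v"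
  by (metis adj_def mono_rtranclp subset_eq)

lemma adj_insert: "adj (insert {x,y} E) a b \<longleftrightarrow> adj E a b \<or> (a = x \<and> b = y) \<or> (a = y \<and> b = x)"
  by (auto simp: adj_def doubleton_eq_iff)

lemma rt_insert:
  "(adj (insert {x,y} E))\<^sup>*\<^sup>* u w \<longleftrightarrow> (adj E)\<^sup>*\<^sup>* u w \<or> ((adj E)\<^sup>*\<^sup>* u x \<and> (adj E)\<^sup>*\<^sup>* y w)
     \<or> ((adj E)\<^sup>*\<^sup>* u y \<and> (adj E)\<^sup>*\<^sup>* x w)"
proof
  assume "(adj (insert {x,y} E))\<^sup>*\<^sup>* u w"
  then show "(adj E)\<^sup>*\<^sup>* u w \<or> ((adj E)\<^sup>*\<^sup>* u x \<and> (adj E)\<^sup>*\<^sup>* y w)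
     \<or> ((adj E)\<^sup>*\<^sup>* u y \<and> (adj E)\<^sup>*\<^sup>* x w)"
  proof (induction rule: rtranclp_induct)
    case base then show ?case by simp
  next
    case (step w z)
    from step.hyps(2) have "adj E w z \<or> (w = x \<and> z = y) \<or> (w = y \<and> z = x)" by (simp add: adj_insert)
    then show ?case using step.IH
      by (meson rtranclp.rtrancl_into_rtrancl rtranclp.rtrancl_refl)
  qed
next
  have 1: "(adj (insert {x,y} E))\<^sup>*\<^sup>* a b" if "(adj E)\<^sup>*\<^sup>* a b" for a b
    using rt_mono[OF _ that, of "insert {x,y} E"] by blast
  have 2: "(adj (insert {x,y} E))\<^sup>*\<^sup>* x y" "(adj (insert {x,y} E))\<^sup>*\<^sup>* y x"
    by (auto simp: adj_insert intro!: r_into_rtranclp)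
  assume "(adj E)\<^sup>*\<^sup>* u w \<or> ((adj E)\<^sup>*\<^sup>* u x \<and> (adj E)\<^sup>*\<^sup>* y w)
     \<or> ((adj E)\<^sup>*\<^sup>* u y \<and> (adj E)\<^sup>*\<^sup>* x w)"
  then show "(adj (insert {x,y} E))\<^sup>*\<^sup>* u w"
    using 1 2 by (meson rtranclp_trans)
qed

definition good_pairing :: "'a set set \<Rightarrow> 'a set \<Rightarrow> ('a set \<times> 'a set set) set \<Rightarrow> bool" where
  "good_pairing E S P \<longleftrightarrow> finite P \<and>
     (\<forall>(D,F)\<in>P. (\<exists>a b. a \<noteq> b \<and> D = {a,b} \<and> (adj F)\<^sup>*\<^sup>* a b) \<and> F \<subseteq> E) \<and>
     (\<forall>p\<in>P. \<forall>q\<in>P. p \<noteq> q \<longrightarrow> fst p \<inter> fst q = {} \<and> snd p \<inter> snd q = {}) \<and>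
     \<Union>(fst ` P) = S"

lemma gp_remove:
  assumes "good_pairing E S P" "Q \<subseteq> P"
  shows "good_pairing E (S - \<Union>(fst ` Q)) (P - Q)"
proof -
  have "\<Union>(fst ` (P - Q)) = S - \<Union>(fst ` Q)"
    using assms unfolding good_pairing_def by fastforce
  then show ?thesis using assms unfolding good_pairing_def by auto
qed

lemma gp_elem: assumes "good_pairing E S P" "(D,F) \<in> P" shows "F \<subseteq> E \<and> (\<exists>a b. a \<noteq> b \<and> D = {a,b} \<and> (adj F)\<^sup>*\<^sup>* a b)"
proof -
  have "\<forall>(D,F)\<in>P. (\<exists>a b. a \<noteq> b \<and> D = {a,b} \<and> (adj F)\<^sup>*\<^sup>* a b) \<and> F \<subseteq> E"
    using assms(1) unfolding good_pairing_def by (elim conjE)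
  from bspec[OF this assms(2)] show ?thesis by simp
qed

lemma gp_disj: "good_pairing E S P \<Longrightarrow> p \<in> P \<Longrightarrow> q \<in> P \<Longrightarrow> p \<noteq> q \<Longrightarrow> fst p \<inter> fst q = {} \<and> snd p \<inter> snd q = {}"
  unfolding good_pairing_def by (elim conjE) simp

lemma gp_union: "good_pairing E S P \<Longrightarrow> \<Union>(fst ` P) = S"
  unfolding good_pairing_def by (elim conjE)

lemma gp_finite: "good_pairing E S P \<Longrightarrow> finite P"
  unfolding good_pairing_def by (elim conjE)

lemma gp_replace:
  assumes "good_pairing E S P" "Q \<subseteq> P" "a \<noteq> b" "(adj F0)\<^sup>*\<^sup>* a b" "F0 \<subseteq> \<Union>(snd ` Q) \<union> (E2 - E)"
    "E \<subseteq> E2" "{a,b} \<inter> (S - \<Union>(fst ` Q)) = {}"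
  shows "good_pairing E2 (S - \<Union>(fst ` Q) \<union> {a,b}) (insert ({a,b},F0) (P - Q))"
proof -
  have r: "good_pairing E (S - \<Union>(fst ` Q)) (P - Q)" by (rule gp_remove[OF assms(1,2)])
  have QE: "\<Union>(snd ` Q) \<subseteq> E"
  proof
    fix f assume "f \<in> \<Union>(snd ` Q)"
    then obtain D F where "(D,F) \<in> Q" "f \<in> F" by auto
    then show "f \<in> E" using gp_elem[OF assms(1)] assms(2) by blast
  qed
  have F0E2: "F0 \<subseteq> E2" using assms(5,6) QE by blast
  have d: "F0 \<inter> F = {}" if "(D,F) \<in> P - Q" for D F
  proof -
    have "snd q \<inter> F = {}" if "q \<in> Q" for q
      using gp_disj[OF assms(1), of q "(D,F)"] \<open>(D,F) \<in> P - Q\<close> that assms(2) by auto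
    moreover have "F \<subseteq> E" using that gp_elem[OF assms(1), of D F] by auto
    ultimately show ?thesis using assms(5) by blast
  qed
  have d2: "{a,b} \<inter> D = {}" if "(D,F) \<in> P - Q" for D F
  proof -
    have "D \<subseteq> \<Union>(fst ` (P - Q))" using that by force
    then have "D \<subseteq> S - \<Union>(fst ` Q)" using gp_union[OF r] by simp
    then show ?thesis using assms(7) by blast
  qed
  have fin: "finite (insert ({a,b},F0) (P - Q))" using gp_finite[OF r] by simp
  have el: "\<forall>(D,F)\<in>insert ({a,b},F0) (P - Q). (\<exists>a b. a \<noteq> b \<and> D = {a,b} \<and> (adj F)\<^sup>*\<^sup>* a b) \<and> F \<subseteq> E2"
  proof (intro ballI, clarify)
    fix D F assume "(D,F) \<in> insert ({a,b},F0) (P - Q)"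
    then consider "D = {a,b}" "F = F0" | "(D,F) \<in> P - Q" by blast
    then show "(\<exists>a b. a \<noteq> b \<and> D = {a,b} \<and> (adj F)\<^sup>*\<^sup>* a b) \<and> F \<subseteq> E2"
    proof cases
      case 1 then show ?thesis using assms(3,4) F0E2 by blast
    next
      case 2 then show ?thesis using gp_elem[OF assms(1), of D F] assms(6) by blast
    qed
  qed
  have pw: "\<forall>p\<in>insert ({a,b},F0) (P - Q). \<forall>q\<in>insert ({a,b},F0) (P - Q). p \<noteq> q \<longrightarrow> fst p \<inter> fst q = {} \<and> snd p \<inter> snd q = {}"
  proof (intro ballI impI)
    fix p q assume p: "p \<in> insert ({a,b},F0) (P - Q)" and q: "q \<in> insert ({a,b},F0) (P - Q)" and pq: "p \<noteq> q"
    show "fst p \<inter> fst q = {} \<and> snd p \<inter> snd q = {}"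
    proof (cases "p = ({a,b},F0)")
      case True
      then have "q \<in> P - Q" using q pq by auto
      then show ?thesis using d[of "fst q" "snd q"] d2[of "fst q" "snd q"] True by auto
    next
      case False
      then have p2: "p \<in> P - Q" using p by auto
      show ?thesis
      proof (cases "q = ({a,b},F0)")
        case True
        then show ?thesis using d[of "fst p" "snd p"] d2[of "fst p" "snd p"] p2 by auto
      next
        case False
        then have "q \<in> P - Q" using q by auto
        then show ?thesis using p2 pq gp_disj[OF assms(1), of p q] by blast
      qed
    qed
  qed
  have "\<Union>(fst ` (P - Q)) = S - \<Union>(fst ` Q)" using gp_union[OF r] .
  then have un: "\<Union>(fst ` insert ({a,b},F0) (P - Q)) = S - \<Union>(fst ` Q) \<union> {a,b}"
    by auto
  show ?thesis unfolding good_pairing_def using fin el pw un by (intro conjI)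
qed

lemma gp_mono: assumes "good_pairing E S P" "E \<subseteq> E2" shows "good_pairing E2 S P"
proof -
  have "\<forall>(D,F)\<in>P. (\<exists>a b. a \<noteq> b \<and> D = {a,b} \<and> (adj F)\<^sup>*\<^sup>* a b) \<and> F \<subseteq> E2"
    using gp_elem[OF assms(1)] assms(2) by blast
  then show ?thesis using assms(1) unfolding good_pairing_def by (elim conjE) (intro conjI)
qed

lemma gp_find:
  assumes "good_pairing E S P" "y \<in> S"
  shows "\<exists>D F b. (D,F) \<in> P \<and> D = {y,b} \<and> y \<noteq> b \<and> (adj F)\<^sup>*\<^sup>* y b"
proof -
  obtain D F where DF: "(D,F) \<in> P" "y \<in> D" using gp_union[OF assms(1)] assms(2) by auto
  then obtain a b where ab: "a \<noteq> b" "D = {a,b}" "(adj F)\<^sup>*\<^sup>* a b"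
    using gp_elem[OF assms(1)] by blast
  show ?thesis
  proof (cases "y = a")
    case True then show ?thesis using DF ab by blast
  next
    case False
    then have "y = b" using DF ab by auto
    then show ?thesis using DF ab rt_sym[OF ab(3)] by (metis insert_commute)
  qed
qed

lemma gp_case2:
  assumes "good_pairing E S' P'" "e \<notin> E" "e = {x,y}" "x \<in> S" "y \<notin> S" "S' = S - {x} \<union> {y}" "x \<noteq> y"
  shows "\<exists>P. good_pairing (insert e E) S P"
proof -
  obtain D F b where DF: "(D,F) \<in> P'" "D = {y,b}" "y \<noteq> b" "(adj F)\<^sup>*\<^sup>* y b"
    using gp_find[OF assms(1)] assms(6) by blast
  have FE: "F \<subseteq> E" using DF(1) gp_elem[OF assms(1)] by blast
  have bS: "b \<in> S'" using DF gp_union[OF assms(1)] by force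
  have xb: "x \<noteq> b" using bS assms(6) assms(7) DF(3) by auto
  have r: "(adj (insert e F))\<^sup>*\<^sup>* x b"
  proof -
    have "(adj (insert e F)) x y" using assms(3) by (simp add: adj_def)
    moreover have "(adj (insert e F))\<^sup>*\<^sup>* y b" using rt_mono[OF _ DF(4)] by blast
    ultimately show ?thesis by (rule converse_rtranclp_into_rtranclp)
  qed
  have "good_pairing (insert e E) (S' - \<Union>(fst ` {(D,F)}) \<union> {x,b}) (insert ({x,b},insert e F) (P' - {(D,F)}))"
    apply (rule gp_replace[OF assms(1)])
    using DF FE r xb assms by auto
  moreover have "S' - \<Union>(fst ` {(D,F)}) \<union> {x,b} = S" using DF bS assms(6) assms(4,5) by auto
  ultimately show ?thesis by auto
qed

lemma odd_toggle: assumes "finite C" "odd (card C)" shows "even (card (if x \<in> C then C - {x} else insert x C))"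
proof (cases "x \<in> C")
  case True
  then have "card (C - {x}) = card C - 1" by (simp add: card_Diff_singleton)
  moreover have "card C > 0" using True \<open>finite C\<close> card_gt_0_iff by blast
  ultimately show ?thesis using True \<open>odd (card C)\<close> by simp
next
  case False
  then show ?thesis using \<open>finite C\<close> \<open>odd (card C)\<close> by simp
qed
  
lemma pairing_exists:
  fixes E :: "'a set set" and S :: "'a set"
  assumes "finite E"
  shows "\<forall>e\<in>E. \<exists>x y. e = {x,y} \<Longrightarrow> finite S \<Longrightarrow> \<forall>z. even (card {t\<in>S. (adj E)\<^sup>*\<^sup>* z t})
    \<Longrightarrow> \<exists>P. good_pairing E S P"
  using assms
proof (induction E arbitrary: S rule: finite_induct)
  case empty
  have emp: "(adj {})\<^sup>*\<^sup>* z t \<longleftrightarrow> z = t" for z t :: 'a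
  proof
    assume "(adj {})\<^sup>*\<^sup>* z t" then show "z = t"
      by (induction rule: rtranclp_induct) (auto simp: adj_def)
  qed auto
  have "S = {}"
  proof (rule ccontr)
    assume "S \<noteq> {}"
    then obtain z where z: "z \<in> S" by blast
    then have "{t\<in>S. (adj {})\<^sup>*\<^sup>* z t} = {z}" using emp by auto
    moreover have "even (card {t\<in>S. (adj {})\<^sup>*\<^sup>* z t})" using empty.prems(3) by blast
    ultimately show False by simp
  qed
  then show ?case unfolding good_pairing_def by (intro exI[of _ "{}"]) auto
next
  case (insert e E)
  obtain x y where e: "e = {x,y}" using insert.prems(1) by blast
  let ?R = "(adj E)\<^sup>*\<^sup>*"
  let ?R2 = "(adj (insert e E))\<^sup>*\<^sup>*"
  have R2: "?R2 u w \<longleftrightarrow> ?R u w \<or> (?R u x \<and> ?R y w) \<or> (?R u y \<and> ?R x w)" for u w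
    unfolding e by (rule rt_insert)
  have IH: "\<exists>P. good_pairing E S' P" if "finite S'" "\<forall>z. even (card {t\<in>S'. ?R z t})" for S'
    using insert.IH[OF _ that] insert.prems(1) by blast
  have sym: "?R u w \<Longrightarrow> ?R w u" for u w by (rule rt_sym)
  have trans: "?R u w \<Longrightarrow> ?R w v \<Longrightarrow> ?R u v" for u w v by (rule rtranclp_trans)
  show ?case
  proof (cases "?R x y")
    case True
    have yx: "?R y x" using sym[OF True] .
    have "?R2 u w \<longleftrightarrow> ?R u w" for u w unfolding R2
      using trans[of u x y] trans[of u y w] trans[of u y x] trans[of u x w] True yx by blast
    then have "\<forall>z. even (card {t\<in>S. ?R z t})" using insert.prems(3) by simp
    then obtain P where "good_pairing E S P" using IH insert.prems(2) by blast
    then show ?thesis using gp_mono by blast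
  next
    case False
    then have xy: "x \<noteq> y" by auto
    define Cx where "Cx = {t\<in>S. ?R x t}"
    define Cy where "Cy = {t\<in>S. ?R y t}"
    have "{t\<in>S. ?R2 x t} = Cx \<union> Cy" unfolding Cx_def Cy_def using R2 by auto
    moreover have "Cx \<inter> Cy = {}"
    proof -
      have "\<not> (?R x t \<and> ?R y t)" for t using False trans[OF _ sym, of x t y] by blast
      then show ?thesis unfolding Cx_def Cy_def by blast
    qed
    moreover have "finite Cx" "finite Cy" using insert.prems(2) unfolding Cx_def Cy_def by auto
    ultimately have evsum: "even (card Cx + card Cy)" using insert.prems(3)
      by (metis card_Un_disjoint)
    have other: "{t\<in>S'. ?R z t} = {t\<in>S'. ?R2 z t}" if "\<not> ?R z x" "\<not> ?R z y" for z S'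
      using R2 that by auto
    have clx: "{t\<in>S'. ?R z t} = {t\<in>S'. ?R x t}" if "?R z x" for z S'
      using trans[OF sym[OF that]] trans[OF that] by auto
    have cly: "{t\<in>S'. ?R z t} = {t\<in>S'. ?R y t}" if "?R z y" for z S'
      using trans[OF sym[OF that]] trans[OF that] by auto
    show ?thesis
    proof (cases "even (card Cx)")
      case True
      then have "even (card Cy)" using evsum by simp
      have "even (card {t\<in>S. ?R z t})" for z
      proof -
        consider "?R z x" | "?R z y" | "\<not> ?R z x" "\<not> ?R z y" by blast
        then show ?thesis
        proof cases
          case 1 then show ?thesis using clx[OF 1, of S] True Cx_def by simp
        next
          case 2 then show ?thesis using cly[OF 2, of S] \<open>even (card Cy)\<close> Cy_def by simp
        next
          case 3 then show ?thesis using other[OF 3, of S] insert.prems(3) by simp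
        qed
      qed
      then obtain P where "good_pairing E S P" using IH insert.prems(2) by blast
      then show ?thesis using gp_mono by blast
    next
      case False
      then have "odd (card Cy)" using evsum by simp
      define S' where "S' = S - {x,y} \<union> ({x,y} - S)"
      have fS': "finite S'" using insert.prems(2) unfolding S'_def by auto
      have "even (card {t\<in>S'. ?R z t})" for z
      proof -
        consider "?R z x" | "?R z y" | "\<not> ?R z x" "\<not> ?R z y" by blast
        then show ?thesis
        proof cases
          case 1
          have "{t\<in>S'. ?R x t} = (if x \<in> Cx then Cx - {x} else insert x Cx)"
            unfolding S'_def Cx_def using \<open>\<not> ?R x y\<close> by auto
          then show ?thesis using clx[OF 1, of S'] odd_toggle[OF \<open>finite Cx\<close> False] by simp
        next
          case 2
          have "\<not> ?R y x" using \<open>\<not> ?R x y\<close> sym by blast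
          then have "{t\<in>S'. ?R y t} = (if y \<in> Cy then Cy - {y} else insert y Cy)"
            unfolding S'_def Cy_def by auto
          then show ?thesis using cly[OF 2, of S'] odd_toggle[OF \<open>finite Cy\<close> \<open>odd (card Cy)\<close>] by simp
        next
          case 3
          have eq: "?R2 z t = ?R z t" for t using R2[of z t] 3 by blast
          have "{t\<in>S'. ?R z t} = {t\<in>S. ?R z t}" unfolding S'_def using 3 by auto
          moreover have "{t\<in>S. ?R2 z t} = {t\<in>S. ?R z t}" using eq by simp
          ultimately show ?thesis using insert.prems(3) by metis
        qed
      qed
      then obtain P' where P': "good_pairing E S' P'" using IH fS' by blast
      show ?thesis
      proof (cases "x \<in> S")
        case xS: True
        show ?thesis
        proof (cases "y \<in> S")
          case yS: True
          have q1: "{} \<subseteq> P'" by simp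
          have q2: "(adj {e})\<^sup>*\<^sup>* x y" using e by (auto simp: adj_def intro!: r_into_rtranclp)
          have q3: "{e} \<subseteq> \<Union>(snd ` {}) \<union> (insert e E - E)" using insert.hyps(2) by auto
          have q4: "E \<subseteq> insert e E" by auto
          have q5: "{x, y} \<inter> (S' - \<Union>(fst ` {})) = {}" using S'_def xS yS by auto
          note gp_replace[OF P' q1 xy q2 q3 q4 q5]
          moreover have "S' - \<Union>(fst ` {}) \<union> {x,y} = S" using xS yS S'_def by auto
          ultimately show ?thesis by auto
        next
          case yS: False
          show ?thesis by (rule gp_case2[OF P' insert.hyps(2) e xS yS]) (use S'_def xy xS yS in auto)
        qed
      next
        case xS: False
        show ?thesis
        proof (cases "y \<in> S")
          case yS: True
          show ?thesis by (rule gp_case2[OF P' insert.hyps(2) _ yS xS]) (use S'_def xy xS yS e in auto)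
        next
          case yS: False
          have S'eq: "S' = S \<union> {x,y}" using S'_def xS yS by auto
          obtain D1 F1 a where D1: "(D1,F1) \<in> P'" "D1 = {x,a}" "x \<noteq> a" "(adj F1)\<^sup>*\<^sup>* x a"
            using gp_find[OF P', of x] S'eq by blast
          show ?thesis
          proof (cases "a = y")
            case True
            have "good_pairing E (S' - \<Union>(fst ` {(D1,F1)})) (P' - {(D1,F1)})"
              by (rule gp_remove[OF P']) (use D1 in auto)
            moreover have "S' - \<Union>(fst ` {(D1,F1)}) = S" using S'eq D1 True xS yS by auto
            ultimately show ?thesis using gp_mono by blast
          next
            case False
            obtain D2 F2 b where D2: "(D2,F2) \<in> P'" "D2 = {y,b}" "y \<noteq> b" "(adj F2)\<^sup>*\<^sup>* y b"
              using gp_find[OF P', of y] S'eq by blast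
            have ne: "(D1,F1) \<noteq> (D2,F2)" using D1 D2 False xy by auto
            then have dis: "D1 \<inter> D2 = {}" "F1 \<inter> F2 = {}" using gp_disj[OF P' D1(1) D2(1)] by auto
            have sub: "D1 \<subseteq> S'" "D2 \<subseteq> S'" using D1(1) D2(1) gp_union[OF P'] by force+
            have FE: "F1 \<subseteq> E" "F2 \<subseteq> E" using D1(1) D2(1) gp_elem[OF P'] by blast+
            have ab: "a \<noteq> b" using dis D1 D2 by auto
            let ?F0 = "insert e (F1 \<union> F2)"
            have r: "(adj ?F0)\<^sup>*\<^sup>* a b"
            proof -
              have "(adj ?F0)\<^sup>*\<^sup>* a x" using rt_mono[OF _ rt_sym[OF D1(4)], of ?F0] by blast
              moreover have "(adj ?F0) x y" using e by (simp add: adj_def)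
              moreover have "(adj ?F0)\<^sup>*\<^sup>* y b" using rt_mono[OF _ D2(4), of ?F0] by blast
              ultimately show ?thesis by (meson rtranclp.rtrancl_into_rtrancl rtranclp_trans converse_rtranclp_into_rtranclp)
            qed
            have "good_pairing (insert e E) (S' - \<Union>(fst ` {(D1,F1),(D2,F2)}) \<union> {a,b}) (insert ({a,b},?F0) (P' - {(D1,F1),(D2,F2)}))"
              apply (rule gp_replace[OF P'])
              using D1 D2 ab r insert.hyps(2) by auto
            moreover have "S' - \<Union>(fst ` {(D1,F1),(D2,F2)}) \<union> {a,b} = S"
              using S'eq D1 D2 sub dis xS yS False xy by auto
            ultimately show ?thesis by auto
          qed
        qed
      qed
    qed
  qed
qed



fun walk :: "'a set set \<Rightarrow> 'a list \<Rightarrow> bool" where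
  "walk F [] = True"
| "walk F [x] = True"
| "walk F (x # y # xs) = ({x,y} \<in> F \<and> walk F (y # xs))"

lemma walk_tl: "walk F (x # ys) \<Longrightarrow> walk F ys"
  by (cases ys) auto

lemma walk_suffix: "walk F (xs @ ys) \<Longrightarrow> walk F ys"
  by (induction xs) (auto dest: walk_tl)

lemma walk_exists:
  assumes "(adj F)\<^sup>*\<^sup>* a b"
  shows "\<exists>p. walk F p \<and> p \<noteq> [] \<and> hd p = a \<and> last p = b \<and> distinct p"
  using assms
proof (induction rule: converse_rtranclp_induct)
  case base
  show ?case by (intro exI[of _ "[b]"]) auto
next
  case (step a c)
  then obtain p where p: "walk F p" "p \<noteq> []" "hd p = c" "last p = b" "distinct p" by blast
  show ?case
  proof (cases "a \<in> set p")
    case True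
    then obtain p1 p2 where pp: "p = p1 @ a # p2" by (meson split_list)
    show ?thesis
      apply (intro exI[of _ "a # p2"])
      using p pp walk_suffix[of F p1 "a # p2"] by auto
  next
    case False
    obtain p' where "p = c # p'" using p(2,3) by (cases p) auto
    then show ?thesis using p False step.hyps(1)
      by (intro exI[of _ "a # p"]) (auto simp: adj_def)
  qed
qed

lemma walk_nth: "walk F p \<Longrightarrow> Suc i < length p \<Longrightarrow> {p ! i, p ! Suc i} \<in> F"
proof (induction F p arbitrary: i rule: walk.induct)
  case (3 F x y xs)
  then show ?case by (cases i) auto
qed auto

lemma cycle_from_path:
  assumes "walk F p" "distinct p" "length p \<ge> 2" "v \<notin> set p" "hd p = a" "last p = b"
  shows "length (v # p) \<ge> 3" "distinct (v # p)" "cycle_edges (v # p) \<subseteq> insert {v,a} (insert {v,b} F)"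
proof -
  show "length (v # p) \<ge> 3" using assms by simp
  show "distinct (v # p)" using assms by simp
  show "cycle_edges (v # p) \<subseteq> insert {v,a} (insert {v,b} F)"
  proof
    fix c assume "c \<in> cycle_edges (v # p)"
    then obtain i where i: "i < length (v # p)" "c = {(v#p) ! i, (v#p) ! ((i + 1) mod length (v#p))}"
      unfolding cycle_edges_def by blast
    let ?n = "length p"
    have "p ! 0 = a" using assms(3,5) by (cases p) auto
    have "p \<noteq> []" using assms(3) by auto
    then have "p ! (?n - 1) = b" using assms(6) by (simp add: last_conv_nth)
    consider "i = 0" | "0 < i" "i < ?n" | "i = ?n" using i by fastforce
    then show "c \<in> insert {v,a} (insert {v,b} F)"
    proof cases
      case 1
      then show ?thesis using i \<open>p ! 0 = a\<close> \<open>p \<noteq> []\<close> by simp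
    next
      case 2
      then obtain j where j: "i = Suc j" by (cases i) auto
      have "(i + 1) mod length (v # p) = Suc i" using 2 by simp
      then have "c = {p ! j, p ! Suc j}" using i j by simp
      then show ?thesis using walk_nth[OF assms(1), of j] 2 j by simp
    next
      case 3
      have "(i + 1) mod length (v # p) = 0" using 3 by simp
      moreover have "(v#p) ! i = p ! (?n - 1)" using 3 \<open>p \<noteq> []\<close> by (simp add: nth_Cons')
      ultimately have "c = {p ! (?n - 1), v}" using i(2) by simp
      then show ?thesis using \<open>p ! (?n - 1) = b\<close> by (auto simp: insert_commute)
    qed
  qed
qed



theorem corollary2p2:
  fixes V :: "'a set" and E :: "'a set set"
  assumes "simple_graph V E"
    and "two_connected V E"
  shows "phi E \<ge> max_degree V E div 2"
proof -
  have finV: "finite V" and Eok: "\<forall>e\<in>E. \<exists>u w. u \<noteq> w \<and> u \<in> V \<and> w \<in> V \<and> e = {u, w}"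
    using assms(1) unfolding simple_graph_def by auto
  have "E \<subseteq> Pow V" using Eok by auto
  then have finE: "finite E" using finV by (meson finite_Pow_iff finite_subset)
  have Vne: "V \<noteq> {}" using assms(2) unfolding two_connected_def connected_graph_def by auto
  have "max_degree V E \<in> degree E ` V" unfolding max_degree_def using finV Vne by (intro Max_in) auto
  then obtain v where vV: "v \<in> V" and dv: "degree E v = max_degree V E" by auto
  define N where "N = {u. {v,u} \<in> E}"
  have img: "{e\<in>E. v\<in>e} = (\<lambda>u. {v,u}) ` N"
  proof
    show "{e\<in>E. v\<in>e} \<subseteq> (\<lambda>u. {v,u}) ` N"
    proof
      fix e assume e: "e \<in> {e\<in>E. v\<in>e}"
      then obtain x y where xy: "e = {x,y}" using Eok by blast
      show "e \<in> (\<lambda>u. {v,u}) ` N"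
      proof (cases "v = x")
        case True then show ?thesis using e xy N_def by auto
      next
        case False then have "v = y" using e xy by auto
        then show ?thesis using e xy N_def by (auto simp: insert_commute)
      qed
    qed
  qed (auto simp: N_def)
  have inj: "inj_on (\<lambda>u. {v,u}) N" by (auto simp: inj_on_def doubleton_eq_iff)
  have NV: "N \<subseteq> V - {v}"
  proof
    fix u assume "u \<in> N"
    then have "{v,u} \<in> E" by (simp add: N_def)
    then obtain x y where "x \<noteq> y" "x \<in> V" "y \<in> V" "{v,u} = {x,y}" using Eok by blast
    then show "u \<in> V - {v}" by (auto simp: doubleton_eq_iff)
  qed
  have finN: "finite N" using NV finV finite_subset by blast
  have cardN: "card N = degree E v"
    unfolding degree_def img using card_image[OF inj] by simp
  obtain S where SN: "S \<subseteq> N" and cardS: "card S = 2 * (degree E v div 2)" and finS: "finite S"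
    using obtain_subset_with_card_n[of "2 * (degree E v div 2)" N] cardN by auto
  define E' where "E' = del_vertex_edges E v"
  have E'E: "E' \<subseteq> E" unfolding E'_def del_vertex_edges_def by auto
  have E'v: "\<forall>e\<in>E'. v \<notin> e" unfolding E'_def del_vertex_edges_def by auto
  have conn: "\<forall>u\<in>V-{v}. \<forall>w\<in>V-{v}. (adj E')\<^sup>*\<^sup>* u w"
    using assms(2) vV unfolding two_connected_def connected_graph_def E'_def by blast
  have finE': "finite E'" using E'E finE finite_subset by blast
  have dbl: "\<forall>e\<in>E'. \<exists>x y. e = {x,y}" using E'E Eok by blast
  have par: "\<forall>z. even (card {t\<in>S. (adj E')\<^sup>*\<^sup>* z t})"
  proof
    fix z
    show "even (card {t\<in>S. (adj E')\<^sup>*\<^sup>* z t})"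
    proof (cases "\<exists>s\<in>S. (adj E')\<^sup>*\<^sup>* z s")
      case True
      then obtain s where s: "s \<in> S" "(adj E')\<^sup>*\<^sup>* z s" by blast
      have "(adj E')\<^sup>*\<^sup>* z t" if "t \<in> S" for t
        using conn s that SN NV rtranclp_trans[OF s(2)] by blast
      then have "{t\<in>S. (adj E')\<^sup>*\<^sup>* z t} = S" by auto
      then show ?thesis using cardS by simp
    next
      case False
      then have e0: "{t\<in>S. (adj E')\<^sup>*\<^sup>* z t} = {}" by auto
      show ?thesis unfolding e0 by simp
    qed
  qed
  obtain P where P: "good_pairing E' S P" using pairing_exists[OF finE' dbl finS par] by blast
  define H where "H = (\<lambda>(D::'a set, F::'a set set). F \<union> (\<lambda>u. {v,u}) ` D)"
  have cyc: "\<exists>C. is_cycle E C \<and> C \<subseteq> H q \<and> C \<noteq> {}" if "q \<in> P" for q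
  proof -
    obtain D F where q: "q = (D,F)" by (cases q)
    then have DF: "(D,F) \<in> P" using that by simp
    obtain a b where ab: "F \<subseteq> E'" "a \<noteq> b" "D = {a,b}" "(adj F)\<^sup>*\<^sup>* a b"
      using gp_elem[OF P DF] by blast
    have DS: "D \<subseteq> S" using gp_union[OF P] DF by force
    obtain p where p: "walk F p" "p \<noteq> []" "hd p = a" "last p = b" "distinct p"
      using walk_exists[OF ab(4)] by blast
    have lp: "length p \<ge> 2"
    proof (rule ccontr)
      assume "\<not> length p \<ge> 2"
      moreover have "length p \<noteq> 0" using p(2) by simp
      ultimately have "length p = 1" by linarith
      then obtain z where "p = [z]" by (metis One_nat_def length_0_conv length_Suc_conv)
      then show False using p(3,4) ab(2) by simp
    qed
    have vp: "v \<notin> set p"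
    proof
      assume "v \<in> set p"
      then obtain i where i: "i < length p" "p ! i = v" by (meson in_set_conv_nth)
      show False
      proof (cases "Suc i < length p")
        case True
        then have "{p ! i, p ! Suc i} \<in> F" by (rule walk_nth[OF p(1)])
        then show False using i E'v ab(1) by auto
      next
        case False
        then obtain j where j: "i = Suc j" using lp i by (cases i) auto
        then have "{p ! j, p ! Suc j} \<in> F" using walk_nth[OF p(1), of j] i by simp
        then show False using i j E'v ab(1) by auto
      qed
    qed
    note cp = cycle_from_path[OF p(1) p(5) lp vp p(3) p(4)]
    define C where "C = cycle_edges (v # p)"
    have "{v,a} \<in> E" "{v,b} \<in> E" using DS SN ab(3) N_def by auto
    then have CH: "C \<subseteq> H q" using cp(3) q ab(3) unfolding C_def H_def by auto
    have CE: "C \<subseteq> E" using cp(3) \<open>{v,a} \<in> E\<close> \<open>{v,b} \<in> E\<close> ab(1) E'E unfolding C_def by auto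
    have "is_cycle E C" unfolding is_cycle_def using cp(1,2) CE C_def by blast
    moreover have "C \<noteq> {}" unfolding C_def cycle_edges_def by auto
    ultimately show ?thesis using CH by blast
  qed
  then obtain f where f: "\<forall>q\<in>P. is_cycle E (f q) \<and> f q \<subseteq> H q \<and> f q \<noteq> {}"
    by metis
  have Hdisj: "H q1 \<inter> H q2 = {}" if "q1 \<in> P" "q2 \<in> P" "q1 \<noteq> q2" for q1 q2
  proof -
    obtain D1 F1 where q1: "q1 = (D1,F1)" by (cases q1)
    obtain D2 F2 where q2: "q2 = (D2,F2)" by (cases q2)
    have d: "D1 \<inter> D2 = {}" "F1 \<inter> F2 = {}" using gp_disj[OF P that] q1 q2 by auto
    have "F1 \<subseteq> E'" "F2 \<subseteq> E'" using gp_elem[OF P] that q1 q2 by blast+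
    then have "\<forall>e\<in>F1 \<union> F2. v \<notin> e" using E'v by blast
    then show ?thesis using d unfolding H_def q1 q2 by (auto simp: doubleton_eq_iff)
  qed
  have injf: "inj_on f P"
  proof
    fix q1 q2 assume "q1 \<in> P" "q2 \<in> P" "f q1 = f q2"
    then show "q1 = q2" using f Hdisj by blast
  qed
  have pwd: "pairwise disjnt (f ` P)"
    unfolding pairwise_def disjnt_def
  proof (intro ballI impI)
    fix C1 C2 assume "C1 \<in> f ` P" "C2 \<in> f ` P" "C1 \<noteq> C2"
    then obtain q1 q2 where "q1 \<in> P" "q2 \<in> P" "C1 = f q1" "C2 = f q2" "q1 \<noteq> q2" by blast
    then show "C1 \<inter> C2 = {}" using f Hdisj[of q1 q2] by blast
  qed
  have finP: "finite P" using gp_finite[OF P] .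
  have "card S = card (\<Union>(fst ` P))" using gp_union[OF P] by simp
  also have "\<dots> = (\<Sum>q\<in>P. card (fst q))"
  proof (rule card_UN_disjoint[OF finP])
    show "\<forall>i\<in>P. finite (fst i)" using gp_elem[OF P] by fastforce
    show "\<forall>i\<in>P. \<forall>j\<in>P. i \<noteq> j \<longrightarrow> fst i \<inter> fst j = {}" using gp_disj[OF P] by blast
  qed
  also have "\<dots> = (\<Sum>q\<in>P. 2)"
  proof (rule sum.cong)
    fix q assume "q \<in> P"
    then show "card (fst q) = 2" using gp_elem[OF P, of "fst q" "snd q"] by auto
  qed simp
  finally have "card S = 2 * card P" by simp
  then have cP: "card (f ` P) = max_degree V E div 2"
    using cardS dv card_image[OF injf] by simp
  have sub: "f ` P \<subseteq> {C. is_cycle E C}" using f by blast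
  have fin: "finite {card \<C> | \<C>. \<C> \<subseteq> {C. is_cycle E C} \<and> pairwise disjnt \<C>}"
  proof (rule finite_subset[of _ "{..card (Pow E)}"])
    show "{card \<C> | \<C>. \<C> \<subseteq> {C. is_cycle E C} \<and> pairwise disjnt \<C>} \<subseteq> {..card (Pow E)}"
    proof
      fix n assume "n \<in> {card \<C> | \<C>. \<C> \<subseteq> {C. is_cycle E C} \<and> pairwise disjnt \<C>}"
      then obtain \<C> where "n = card \<C>" "\<C> \<subseteq> {C. is_cycle E C}" by blast
      moreover have "{C. is_cycle E C} \<subseteq> Pow E" unfolding is_cycle_def by auto
      ultimately show "n \<in> {..card (Pow E)}" using finE by (simp add: card_mono subset_trans)
    qed
  qed simp
  have "card (f ` P) \<le> phi E" unfolding phi_def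
    by (rule Max_ge[OF fin]) (use sub pwd in blast)
  then show ?thesis using cP by simp
qed

end
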